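(* Let $n$ be a prime and $1\le a_1<a_2\le n/2$ integers, and let $\lambda_j=\omega^{a_1 j}+\omega^{-a_1 j}+\omega^{a_2 j}+\omega^{-a_2 j}$, $j=0,\dots,n-1$, with $\omega=e^{2\pi i/n}$, be the eigenvalues of $A(C_n(a_1,a_2))$ (with eigenvector $(1,\omega^j,\dots,\omega^{(n-1)j})$ for $\lambda_j$). (i) If $n\nmid a_1^2+a_2^2$, then $A(C_n(a_1,a_2))$ has the simple eigenvalue $\lambda_0=4$, and every other eigenvalue has multiplicity exactly two; more precisely, for $j,k\in\{1,\dots,n-1\}$, $\lambda_j=\lambda_k$ if and only if $j=k$ or $n\mid j+k$. (ii) If $n\mid a_1^2+a_2^2$, then for $j,k\in\{1,\dots,n-1\}$, $\lambda_j=\lambda_k$ if and only if $j=k$, or $n\mid j+k$, or $n\mid j^2+k^2$.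
   Context: A circulant graph $C_n(a_1,a_2)$, with integers $1\le a_1<a_2\le n/2$, has vertex set $\{0,1,\dots,n-1\}$, and $i\sim j$ if and only if $i-j\equiv\pm a_1$ or $\pm a_2\pmod n$. Its adjacency matrix $A(C_n(a_1,a_2))$ is the $n\times n$ matrix with $A_{ij}=1$ if $i\sim j$ and $0$ otherwise. *)

theory Defs
  imports Complex_Main "Jordan_Normal_Form.Char_Poly" "HOL-Number_Theory.Cong"
begin

definition circ_adj :: "nat \<Rightarrow> nat \<Rightarrow> nat \<Rightarrow> complex mat" where
  "circ_adj n a1 a2 = mat n n (\<lambda>(i, j).
     if [int i - int j = int a1] (mod int n) \<or> [int i - int j = - int a1] (mod int n)
      \<or> [int i - int j = int a2] (mod int n) \<or> [int i - int j = - int a2] (mod int n)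
     then 1 else 0)"

definition omega :: "nat \<Rightarrow> complex" where
  "omega n = exp (2 * of_real pi * \<i> / of_nat n)"

definition circ_eig :: "nat \<Rightarrow> nat \<Rightarrow> nat \<Rightarrow> nat \<Rightarrow> complex" where
  "circ_eig n a1 a2 j = omega n ^ (a1 * j) + inverse (omega n ^ (a1 * j))
                      + omega n ^ (a2 * j) + inverse (omega n ^ (a2 * j))"

end

theory Submission
  imports Defs "Berlekamp_Zassenhaus.Factorize_Rat_Poly"
begin

hide_const (open) Coset.order module.smult


lemma omega_cis: "n > 0 \<Longrightarrow> omega n ^ k = cis (2*pi*real k / real n)"
proof -
  assume n: "n > 0"
  have "omega n = cis (2*pi / real n)"
    unfolding omega_def cis_conv_exp by (simp add: mult_ac)
  thus ?thesis by (simp add: DeMoivre mult_ac)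
qed

lemma omega_nz: "omega n \<noteq> 0"
  unfolding omega_def by simp

lemma omega_pow_eq_1: assumes n: "n > 0" shows "omega n ^ k = 1 \<longleftrightarrow> n dvd k"
proof
  assume "omega n ^ k = 1"
  hence "cos (2*pi*real k / real n) = 1" using omega_cis[OF n, of k] by (simp add: complex_eq_iff)
  then obtain m :: int where m: "2*pi*real k / real n = real_of_int m * 2 * pi"
    by (subst (asm) cos_one_2pi_int) blast
  hence "real k = real_of_int m * real n" using n by (simp add: field_simps)
  hence "int k = m * int n" by (metis of_int_eq_iff of_int_mult of_int_of_nat_eq)
  hence "int n dvd int k" by simp
  thus "n dvd k" by simp
next
  assume "n dvd k"
  then obtain m where k: "k = n * m" by auto
  have "omega n ^ n = 1" using omega_cis[OF n, of n] n by (simp add: complex_eq_iff)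
  thus "omega n ^ k = 1" by (simp add: k power_mult)
qed

lemma omega_pow_mod: assumes n: "n > 0" shows "omega n ^ k = omega n ^ (k mod n)"
proof -
  have "omega n ^ k = (omega n ^ n) ^ (k div n) * omega n ^ (k mod n)"
  proof -
    have "omega n ^ k = omega n ^ (n * (k div n) + k mod n)" by simp
    thus ?thesis by (simp only: power_add power_mult)
  qed
  thus ?thesis using omega_pow_eq_1[OF n, of n] by simp
qed

definition E :: "nat \<Rightarrow> int \<Rightarrow> complex" where
  "E n x = omega n ^ nat (x mod int n)"

lemma E_cong: "x mod int n = y mod int n \<Longrightarrow> E n x = E n y"
  unfolding E_def by simp

lemma E_of_nat: assumes "n > 0" shows "E n (int m) = omega n ^ m"
proof -
  have "nat (int m mod int n) = m mod n" by (simp add: of_nat_mod[symmetric] del: of_nat_mod)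
  thus ?thesis unfolding E_def using omega_pow_mod[OF assms, of m] by simp
qed

lemma E_add: assumes n: "n > 0" shows "E n (x + y) = E n x * E n y"
proof -
  have "E n x * E n y = omega n ^ (nat (x mod int n) + nat (y mod int n))"
    unfolding E_def by (simp add: power_add)
  also have "\<dots> = E n (int (nat (x mod int n) + nat (y mod int n)))"
    by (rule sym, rule E_of_nat[OF n])
  also have "\<dots> = E n (x + y)"
  proof (rule E_cong)
    have "int (nat (x mod int n) + nat (y mod int n)) = x mod int n + y mod int n" using n by simp
    thus "int (nat (x mod int n) + nat (y mod int n)) mod int n = (x + y) mod int n"
      by (simp add: mod_add_eq)
  qed
  finally show ?thesis by simp
qed

lemma E_zero: "E n 0 = 1" unfolding E_def by simp

lemma E_eq_1: assumes n: "n > 0" shows "E n x = 1 \<longleftrightarrow> int n dvd x"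
proof -
  have "E n x = 1 \<longleftrightarrow> n dvd nat (x mod int n)" unfolding E_def using omega_pow_eq_1[OF n] by simp
  also have "\<dots> \<longleftrightarrow> int n dvd x mod int n" using n
    by (metis int_dvd_int_iff nat_0_le pos_mod_sign of_nat_0_less_iff)
  also have "\<dots> \<longleftrightarrow> int n dvd x" by (simp add: dvd_mod_iff)
  finally show ?thesis .
qed

lemma E_neg: assumes n: "n > 0" shows "E n (- x) = inverse (E n x)"
proof -
  have "E n x * E n (-x) = 1" using E_add[OF n, of x "-x"] E_zero by simp
  thus ?thesis by (metis inverse_unique)
qed

lemma E_pow: assumes n: "n > 0" shows "E n x ^ l = E n (x * int l)"
  by (induction l) (simp_all add: E_zero E_add[OF n] algebra_simps)

lemma E_eq_iff: assumes n: "n > 0" shows "E n x = E n y \<longleftrightarrow> int n dvd x - y"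
proof -
  have ny: "E n y \<noteq> 0" unfolding E_def using omega_nz by simp
  have "E n x = E n (x - y) * E n y" using E_add[OF n, of "x - y" y] by simp
  hence "E n x = E n y \<longleftrightarrow> E n (x - y) = 1" using ny by auto
  thus ?thesis using E_eq_1[OF n] by simp
qed

lemma eisenstein_aux:
  fixes A B f :: "int poly" and q :: int
  assumes q: "prime q" and f: "f = A * B" and dA: "degree A > 0" and dB: "degree B > 0"
    and low: "\<And>k. k < degree f \<Longrightarrow> q dvd coeff f k"
    and lead: "\<not> q dvd lead_coeff f"
    and qB: "\<not> q dvd coeff B 0"
  shows False
proof -
  have A0: "A \<noteq> 0" using dA by auto
  have B0: "B \<noteq> 0" using dB by auto
  have dfe: "degree f = degree A + degree B" using f A0 B0 by (simp add: degree_mult_eq)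
  have lc: "lead_coeff f = lead_coeff A * lead_coeff B" using f by (simp add: lead_coeff_mult)
  have nA: "\<not> q dvd lead_coeff A"
  proof
    assume "q dvd lead_coeff A"
    hence "q dvd lead_coeff A * lead_coeff B" by (rule dvd_mult2)
    thus False using lead lc by simp
  qed
  define i where "i = (LEAST i. \<not> q dvd coeff A i)"
  have ni: "\<not> q dvd coeff A i" unfolding i_def by (rule LeastI[of _ "degree A"]) (use nA in auto)
  have ile: "i \<le> degree A" unfolding i_def by (rule Least_le) (use nA in auto)
  have below: "\<And>t. t < i \<Longrightarrow> q dvd coeff A t" unfolding i_def using not_less_Least by blast
  have "i < degree f" using ile dfe dB by simp
  hence qf: "q dvd coeff f i" by (rule low)
  have "coeff f i = (\<Sum>t\<le>i. coeff A t * coeff B (i - t))" using f by (simp add: coeff_mult)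
  also have "\<dots> = (\<Sum>t<i. coeff A t * coeff B (i - t)) + coeff A i * coeff B 0"
    by (simp add: lessThan_Suc_atMost[symmetric])
  finally have eq: "coeff f i = (\<Sum>t<i. coeff A t * coeff B (i - t)) + coeff A i * coeff B 0" .
  have sd: "q dvd (\<Sum>t<i. coeff A t * coeff B (i - t))" by (rule dvd_sum) (simp add: below)
  have "q dvd (\<Sum>t<i. coeff A t * coeff B (i - t)) + coeff A i * coeff B 0" using qf eq by simp
  hence "q dvd coeff A i * coeff B 0" by (simp only: dvd_add_right_iff[OF sd])
  hence "q dvd coeff A i \<or> q dvd coeff B 0" using q by (simp add: prime_dvd_mult_iff)
  thus False using ni qB by blast
qed

lemma eisenstein:
  fixes A B f :: "int poly" and q :: int
  assumes q: "prime q" and f: "f = A * B" and dA: "degree A > 0" and dB: "degree B > 0"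
    and low: "\<And>k. k < degree f \<Longrightarrow> q dvd coeff f k"
    and lead: "\<not> q dvd lead_coeff f"
    and c0: "\<not> q^2 dvd coeff f 0"
  shows False
proof -
  have f0: "coeff f 0 = coeff A 0 * coeff B 0" using f by (simp add: coeff_mult_0)
  have "A \<noteq> 0" "B \<noteq> 0" using dA dB by auto
  hence "0 < degree f" using f dA dB by (simp add: degree_mult_eq)
  moreover have "\<not> (q dvd coeff A 0 \<and> q dvd coeff B 0)"
  proof
    assume "q dvd coeff A 0 \<and> q dvd coeff B 0"
    hence "q * q dvd coeff A 0 * coeff B 0" by (intro mult_dvd_mono) auto
    thus False using c0 f0 by (simp add: power2_eq_square)
  qed
  moreover have "q dvd coeff B 0" using eisenstein_aux[of q f A B] q f dA dB low lead by blast
  moreover have "q dvd coeff A 0"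
  proof -
    have f': "f = B * A" using f by (simp add: mult.commute)
    show ?thesis using eisenstein_aux[of q f B A] q f' dA dB low lead by blast
  qed
  ultimately show False by blast
qed

definition cyc :: "nat \<Rightarrow> int poly" where "cyc p = (\<Sum>i<p. monom 1 i)"

lemma coeff_cyc: "coeff (cyc p) k = (if k < p then 1 else 0)"
  unfolding cyc_def by (simp add: coeff_sum)

lemma degree_cyc: assumes "p > 0" shows "degree (cyc p) = p - 1"
proof (rule antisym)
  show "degree (cyc p) \<le> p - 1" by (rule degree_le) (auto simp: coeff_cyc)
  show "p - 1 \<le> degree (cyc p)" by (rule le_degree) (use assms in \<open>simp add: coeff_cyc\<close>)
qed

lemma geo_ring: "((x::'a::comm_ring_1) - 1) * (\<Sum>i<p. x^i) = x^p - 1"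
  by (induction p) (simp_all add: algebra_simps)

lemma cyc_alt: "cyc p = (\<Sum>i<p. [:0,1:]^i)"
  unfolding cyc_def by (simp add: monom_altdef)

lemma cyc_mult: "([:0,1:] - 1) * cyc p = [:0,1:]^p - 1"
  unfolding cyc_alt by (rule geo_ring)

definition psi :: "nat \<Rightarrow> int poly" where "psi p = pcompose (cyc p) [:1,1:]"

lemma psi_mult: "[:0,1:] * psi p = [:1,1:]^p - 1"
proof -
  have "pcompose (([:0,1:] - 1) * cyc p) [:1,1:] = pcompose ([:0,1:]^p - 1) [:1,1:]"
    by (simp only: cyc_mult)
  moreover have "pcompose ([:0,1:] - 1) [:1,1:] = ([:1,1:] - 1 :: int poly)"
    by (simp add: pcompose_diff pcompose_pCons)
  moreover have h: "([:1,1:] - 1 :: int poly) = [:0,1:]"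
    by (rule poly_eqI) (simp add: coeff_pCons split: nat.split)
  moreover have "pcompose ([:0,1:]^p - 1) [:1,1:] = ([:1,1:]^p - 1 :: int poly)"
    by (simp add: pcompose_diff pcompose_hom.hom_power pcompose_pCons)
  ultimately show ?thesis by (simp only: pcompose_mult psi_def)
qed

lemma coeff_psi: assumes "k < p" shows "coeff (psi p) k = int (p choose Suc k)"
proof -
  have "coeff ([:0,1:] * psi p) (Suc k) = coeff ([:1,1:]^p - 1) (Suc k)" by (simp only: psi_mult)
  moreover have "coeff ([:0,1:] * psi p) (Suc k) = coeff (psi p) k" by simp
  moreover have "coeff ([:1,1:]^p - 1 :: int poly) (Suc k) = coeff ([:1,1:]^p) (Suc k)" by simp
  moreover have "coeff ([:1,1:]^p :: int poly) (Suc k) = int (p choose Suc k)"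
    using coeff_linear_poly_power[of "Suc k" p "1::int" 1] assms by simp
  ultimately show ?thesis by simp
qed

lemma degree_psi: assumes "p > 0" shows "degree (psi p) = p - 1"
  unfolding psi_def by (simp add: degree_pcompose degree_cyc[OF assms])

lemma cyc_irr: assumes p: "prime p" shows "irreducible\<^sub>d (cyc p)"
proof (rule irreducible\<^sub>dI)
  have p1: "p > 1" using p prime_gt_1_nat by blast
  show "degree (cyc p) > 0" using p1 degree_cyc[of p] by simp
  fix q r :: "int poly"
  assume dq: "degree q > 0" "degree q < degree (cyc p)" and dr: "degree r > 0" "degree r < degree (cyc p)"
    and qr: "cyc p = q * r"
  have psi: "psi p = pcompose q [:1,1:] * pcompose r [:1,1:]"
    unfolding psi_def qr by (simp add: pcompose_mult)
  have dq': "degree (pcompose q [:1,1:]) > 0" using dq by (simp add: degree_pcompose)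
  have dr': "degree (pcompose r [:1,1:]) > 0" using dr by (simp add: degree_pcompose)
  have ip: "prime (int p)" using p by simp
  show False
  proof (rule eisenstein[OF ip psi dq' dr'])
    fix k assume "k < degree (psi p)"
    hence k: "Suc k < p" using degree_psi[of p] p1 by simp
    hence "p dvd (p choose Suc k)" using p by (intro dvd_choose_prime) auto
    thus "int p dvd coeff (psi p) k" using coeff_psi[of k p] k by simp
  next
    have "lead_coeff (psi p) = 1" using degree_psi[of p] p1 coeff_psi[of "p - 1" p] by simp
    thus "\<not> int p dvd lead_coeff (psi p)" using p1 by simp
  next
    have "coeff (psi p) 0 = int p" using coeff_psi[of 0 p] p1 by simp
    moreover have "\<not> (int p)^2 dvd int p"
    proof
      assume "(int p)^2 dvd int p"
      hence "int p * int p dvd int p * 1" by (simp add: power2_eq_square)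
      hence "int p dvd 1" using p1 by (simp only: dvd_mult_cancel_left) simp
      thus False using p1 by simp
    qed
    ultimately show "\<not> (int p)^2 dvd coeff (psi p) 0" by simp
  qed
qed

lemma cyc_root: assumes p: "prime p" shows "(\<Sum>i<p. omega p ^ i) = 0"
proof -
  have p0: "p > 0" using p prime_gt_0_nat by blast
  have "omega p \<noteq> 1" using omega_pow_eq_1[OF p0, of 1] p prime_gt_1_nat by auto
  hence "(\<Sum>i<p. omega p ^ i) = (omega p ^ p - 1) / (omega p - 1)" by (rule geometric_sum)
  also have "omega p ^ p = 1" using omega_pow_eq_1[OF p0, of p] by simp
  finally show ?thesis by simp
qed

lemma deg0_const: "degree (q::'a::zero poly) = 0 \<Longrightarrow> q = [:coeff q 0:]"
  by (rule poly_eqI) (auto simp: coeff_eq_0 coeff_pCons split: nat.split)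

lemma LI:
  fixes c :: "nat \<Rightarrow> int"
  assumes p: "prime p" and s: "(\<Sum>x<p. of_int (c x) * omega p ^ x) = 0" and x: "x < p"
  shows "c x = c 0"
proof -
  have p0: "p > 0" using p prime_gt_0_nat by blast
  define Phi :: "rat poly" where "Phi = of_int_poly (cyc p)"
  define P :: "rat poly" where "P = (\<Sum>x<p. monom (of_int (c x)) x)"
  define ev :: "rat poly \<Rightarrow> complex" where "ev q = poly (map_poly of_rat q) (omega p)" for q
  have ev_mult: "ev (a * b) = ev a * ev b" for a b
  proof -
    interpret mh: map_poly_comm_semiring_hom "of_rat :: rat \<Rightarrow> complex" ..
    show ?thesis unfolding ev_def by (simp add: mh.hom_mult)
  qed
  have ev_add: "ev (a + b) = ev a + ev b" for a b unfolding ev_def by (simp add: hom_distribs)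
  have ev_const: "ev [:a:] = of_rat a" for a unfolding ev_def by (cases "a = 0") (simp_all add: map_poly_pCons)
  have coeffP: "coeff P k = (if k < p then of_int (c k) else 0)" for k
    unfolding P_def by (simp add: coeff_sum)
  have coeffPhi: "coeff Phi k = (if k < p then 1 else 0)" for k
    unfolding Phi_def by (simp add: coeff_cyc)
  have dPhi: "degree Phi = p - 1" unfolding Phi_def using degree_cyc[OF p0] by simp
  have evP: "ev P = 0"
  proof -
    have "map_poly of_rat P = (\<Sum>x<p. monom (of_int (c x)) x :: complex poly)"
      by (rule poly_eqI) (simp add: coeffP coeff_map_poly coeff_sum)
    hence "ev P = (\<Sum>x<p. of_int (c x) * omega p ^ x)" unfolding ev_def by (simp add: poly_sum poly_monom)
    thus ?thesis using s by simp
  qed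
  have evPhi: "ev Phi = 0"
  proof -
    have "map_poly of_rat Phi = (\<Sum>x<p. monom 1 x :: complex poly)"
      by (rule poly_eqI) (simp add: coeffPhi coeff_map_poly coeff_sum)
    hence "ev Phi = (\<Sum>x<p. omega p ^ x)" unfolding ev_def by (simp add: poly_sum poly_monom)
    thus ?thesis using cyc_root[OF p] by simp
  qed
  have irr: "irreducible\<^sub>d Phi" unfolding Phi_def by (rule irreducible\<^sub>d_int_rat[OF cyc_irr[OF p]])
  define g where "g = gcd P Phi"
  obtain u v where uv: "bezout_coefficients P Phi = (u, v)" by (cases "bezout_coefficients P Phi") auto
  have bz: "u * P + v * Phi = g" unfolding g_def by (rule bezout_coefficients[OF uv])
  have "ev g = ev u * ev P + ev v * ev Phi" unfolding bz[symmetric] by (simp add: ev_mult ev_add)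
  hence evg: "ev g = 0" using evP evPhi by simp
  have Phi0: "Phi \<noteq> 0" using irreducible\<^sub>dD(1)[OF irr] by auto
  have "g dvd Phi" unfolding g_def by simp
  then obtain h where gh: "Phi = g * h" by (rule dvdE)
  have g0: "g \<noteq> 0" and h0: "h \<noteq> 0" using gh Phi0 by auto
  have dg: "degree g > 0"
  proof (rule ccontr)
    assume "\<not> degree g > 0"
    hence "degree g = 0" by simp
    hence gc: "g = [:coeff g 0:]" by (rule deg0_const)
    hence "coeff g 0 \<noteq> 0" using g0 by (metis pCons_0_0)
    moreover have "ev g = of_rat (coeff g 0)" by (subst gc) (rule ev_const)
    ultimately show False using evg by simp
  qed
  have dh: "degree h = 0"
  proof (rule ccontr)
    assume dh: "degree h \<noteq> 0"
    have deq: "degree Phi = degree g + degree h" using gh g0 h0 by (simp add: degree_mult_eq)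
    hence "degree g < degree Phi" "degree h < degree Phi" using dg dh by auto
    thus False using irreducible\<^sub>dD(2)[OF irr] gh by blast
  qed
  hence hc: "h = [:coeff h 0:]" by (rule deg0_const)
  have h00: "coeff h 0 \<noteq> 0" using h0 hc by (metis pCons_0_0)
  have "Phi = g * [:coeff h 0:]" using gh hc by metis
  hence "Phi = smult (coeff h 0) g" by simp
  hence "g = smult (inverse (coeff h 0)) Phi" using h00 by simp
  hence "Phi dvd g" by (simp add: dvd_smult)
  moreover have "g dvd P" unfolding g_def by simp
  ultimately have "Phi dvd P" by (rule dvd_trans)
  then obtain r where Pr: "P = Phi * r" by (rule dvdE)
  have dr: "degree r = 0"
  proof (rule ccontr)
    assume dr: "degree r \<noteq> 0"
    hence "r \<noteq> 0" by auto
    hence "degree P = degree Phi + degree r" using Pr Phi0 by (simp add: degree_mult_eq)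
    moreover have "degree P \<le> p - 1" by (rule degree_le) (auto simp: coeffP)
    ultimately show False using dPhi dr by simp
  qed
  hence rc: "r = [:coeff r 0:]" by (rule deg0_const)
  have "P = Phi * [:coeff r 0:]" using Pr rc by metis
  hence PP: "P = smult (coeff r 0) Phi" by simp
  have "of_int (c x) = coeff r 0" using arg_cong[OF PP, of "\<lambda>q. coeff q x"] x by (simp add: coeffP coeffPhi)
  moreover have "of_int (c 0) = coeff r 0" using arg_cong[OF PP, of "\<lambda>q. coeff q 0"] p0 by (simp add: coeffP coeffPhi)
  ultimately show ?thesis by simp
qed

definition F :: "nat \<Rightarrow> int \<Rightarrow> complex" where "F n x = E n x + E n (-x)"

definition LL :: "nat \<Rightarrow> nat \<Rightarrow> nat \<Rightarrow> int list" where
  "LL a1 a2 j = [int a1 * int j, - (int a1 * int j), int a2 * int j, - (int a2 * int j)]"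

definition cnt :: "nat \<Rightarrow> int list \<Rightarrow> nat \<Rightarrow> nat" where
  "cnt p L x = length (filter (\<lambda>e. nat (e mod int p) = x) L)"

lemma eig_LL: assumes p: "p > 0" shows "circ_eig p a1 a2 j = (\<Sum>e\<leftarrow>LL a1 a2 j. E p e)"
proof -
  have "omega p ^ (a1 * j) = E p (int a1 * int j)" using E_of_nat[OF p, of "a1 * j"] by simp
  moreover have "omega p ^ (a2 * j) = E p (int a2 * int j)" using E_of_nat[OF p, of "a2 * j"] by simp
  ultimately show ?thesis unfolding circ_eig_def LL_def by (simp add: E_neg[OF p] add.assoc)
qed

lemma eig_F: assumes p: "p > 0" shows "circ_eig p a1 a2 j = F p (int a1 * int j) + F p (int a2 * int j)"
  unfolding eig_LL[OF p] LL_def F_def by (simp add: add.assoc)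

lemma F_cong: assumes p: "p > 0" and h: "int p dvd x - y \<or> int p dvd x + y" shows "F p x = F p y"
proof (cases "int p dvd x - y")
  case True
  then obtain k where k: "x - y = int p * k" by (rule dvdE)
  have "(-x) - (-y) = int p * (-k)" using k by simp
  hence "int p dvd (-x) - (-y)" by (rule dvdI)
  hence "E p (-x) = E p (-y)" by (simp only: E_eq_iff[OF p])
  moreover have "E p x = E p y" using True by (simp only: E_eq_iff[OF p])
  ultimately show ?thesis unfolding F_def by simp
next
  case False
  hence d: "int p dvd x + y" using h by simp
  then obtain k where k: "x + y = int p * k" by (rule dvdE)
  have "x - (-y) = int p * k" using k by simp
  hence "int p dvd x - (-y)" by (rule dvdI)
  hence "E p x = E p (-y)" by (simp only: E_eq_iff[OF p])
  moreover have "(-x) - y = int p * (-k)" using k by simp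
  hence "int p dvd (-x) - y" by (rule dvdI)
  hence "E p (-x) = E p y" by (simp only: E_eq_iff[OF p])
  ultimately show ?thesis unfolding F_def by simp
qed

lemma sum_cnt: assumes p: "p > 0"
  shows "(\<Sum>e\<leftarrow>L. E p e) = (\<Sum>x<p. of_nat (cnt p L x) * omega p ^ x)"
proof (induction L)
  case Nil
  show ?case by (simp add: cnt_def)
next
  case (Cons e L)
  have lt: "nat (e mod int p) < p" using p by (simp add: nat_less_iff)
  have Ee: "E p e = (\<Sum>x<p. (if nat (e mod int p) = x then omega p ^ x else 0))"
    using lt unfolding E_def by simp
  have cnt1: "of_nat (cnt p (e # L) x) * omega p ^ x = of_nat (cnt p L x) * omega p ^ x
      + (if nat (e mod int p) = x then omega p ^ x else 0)" for x
    unfolding cnt_def by (simp add: distrib_right)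
  have "(\<Sum>x<p. of_nat (cnt p (e # L) x) * omega p ^ x) = (\<Sum>x<p. of_nat (cnt p L x) * omega p ^ x)
      + (\<Sum>x<p. (if nat (e mod int p) = x then omega p ^ x else 0))"
    by (simp only: cnt1 sum.distrib)
  thus ?case using Cons.IH Ee by simp
qed

lemma eig_eq_cnt:
  assumes p: "prime p" and eq: "circ_eig p a1 a2 j = circ_eig p a1 a2 k" and x: "x < p"
  shows "int (cnt p (LL a1 a2 j) x) - int (cnt p (LL a1 a2 k) x)
       = int (cnt p (LL a1 a2 j) 0) - int (cnt p (LL a1 a2 k) 0)"
proof -
  have p0: "p > 0" using p prime_gt_0_nat by blast
  define c where "c x = int (cnt p (LL a1 a2 j) x) - int (cnt p (LL a1 a2 k) x)" for x
  have "(\<Sum>x<p. of_int (c x) * omega p ^ x) =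
        (\<Sum>x<p. of_nat (cnt p (LL a1 a2 j) x) * omega p ^ x) - (\<Sum>x<p. of_nat (cnt p (LL a1 a2 k) x) * omega p ^ x)"
    unfolding c_def by (simp add: sum_subtractf left_diff_distrib)
  also have "\<dots> = circ_eig p a1 a2 j - circ_eig p a1 a2 k"
    by (simp add: eig_LL[OF p0] sum_cnt[OF p0])
  also have "\<dots> = 0" using eq by simp
  finally have "c x = c 0" using LI[OF p _ x] by blast
  thus ?thesis unfolding c_def .
qed

lemma not_dvd_small: assumes "0 < x" "x < int p" shows "\<not> int p dvd x"
proof
  assume "int p dvd x"
  hence "\<bar>int p\<bar> \<le> \<bar>x\<bar>" using assms by (intro dvd_imp_le_int) auto
  thus False using assms by simp
qed

lemma not_dvd_prod: assumes p: "prime p" and a: "0 < a" "a < p" and j: "0 < j" "j < p"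
  shows "\<not> int p dvd int a * int j"
proof
  have ip: "prime (int p)" using p by simp
  assume "int p dvd int a * int j"
  hence "int p dvd int a \<or> int p dvd int j" using ip by (simp add: prime_dvd_mult_iff)
  thus False using not_dvd_small[of "int a" p] not_dvd_small[of "int j" p] a j by auto
qed

lemma cnt_LL_0: assumes p: "prime p" and a: "0 < a1" "a1 < p" "0 < a2" "a2 < p" and j: "0 < j" "j < p"
  shows "cnt p (LL a1 a2 j) 0 = 0"
proof -
  have p0: "p > 0" using p prime_gt_0_nat by blast
  have z: "nat (e mod int p) = 0 \<longleftrightarrow> int p dvd e" for e
  proof -
    have "0 \<le> e mod int p" using p0 by simp
    hence "nat (e mod int p) = 0 \<longleftrightarrow> e mod int p = 0" by linarith
    thus ?thesis by (simp add: dvd_eq_mod_eq_0)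
  qed
  have nd: "\<forall>e\<in>set (LL a1 a2 j). \<not> int p dvd e"
    unfolding LL_def using not_dvd_prod[OF p a(1,2) j] not_dvd_prod[OF p a(3,4) j] by simp
  have "filter (\<lambda>e. nat (e mod int p) = 0) (LL a1 a2 j) = []"
    by (rule filter_False) (use nd z in blast)
  thus ?thesis unfolding cnt_def by simp
qed

lemma cnt_pos: "cnt p L x > 0 \<longleftrightarrow> (\<exists>e\<in>set L. nat (e mod int p) = x)"
  unfolding cnt_def by (metis (mono_tags) filter_empty_conv length_greater_0_conv)

lemma member_LL:
  assumes p: "prime p" and a: "0 < a1" "a1 < p" "0 < a2" "a2 < p" and j: "0 < j" "j < p" and k: "0 < k" "k < p"
    and eq: "circ_eig p a1 a2 j = circ_eig p a1 a2 k" and X: "X \<in> set (LL a1 a2 j)"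
  shows "\<exists>e \<in> set (LL a1 a2 k). int p dvd X - e"
proof -
  have p0: "p > 0" using p prime_gt_0_nat by blast
  define x where "x = nat (X mod int p)"
  have x: "x < p" unfolding x_def using p0 by (simp add: nat_less_iff)
  have "int (cnt p (LL a1 a2 j) x) = int (cnt p (LL a1 a2 k) x)"
    using eig_eq_cnt[OF p eq x] cnt_LL_0[OF p a j] cnt_LL_0[OF p a k] by simp
  moreover have "cnt p (LL a1 a2 j) x > 0" unfolding cnt_pos x_def using X by blast
  ultimately have "cnt p (LL a1 a2 k) x > 0" by simp
  then obtain e where e: "e \<in> set (LL a1 a2 k)" "nat (e mod int p) = nat (X mod int p)"
    unfolding cnt_pos x_def by blast
  have "X mod int p = e mod int p" using e(2) p0
    by (metis Euclidean_Rings.pos_mod_sign nat_eq_iff2 of_nat_0_less_iff)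
  hence "int p dvd X - e" by (simp only: mod_eq_dvd_iff)
  thus ?thesis using e(1) by blast
qed

lemma eig_0: "circ_eig p a1 a2 0 = 4"
  unfolding circ_eig_def by simp

lemma eig_ne_4:
  assumes p: "prime p" and a: "0 < a1" "a1 < p" "0 < a2" "a2 < p" and j: "0 < j" "j < p"
  shows "circ_eig p a1 a2 j \<noteq> 4"
proof
  assume eq4: "circ_eig p a1 a2 j = 4"
  have p0: "p > 0" using p prime_gt_0_nat by blast
  have ceq: "circ_eig p a1 a2 j = circ_eig p a1 a2 0" using eq4 eig_0 by simp
  define x where "x = nat ((int a1 * int j) mod int p)"
  have x: "x < p" unfolding x_def using p0 by (simp add: nat_less_iff)
  have r0: "0 \<le> (int a1 * int j) mod int p" using p0 by simp
  have x0: "x \<noteq> 0"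
  proof
    assume "x = 0"
    hence "(int a1 * int j) mod int p \<le> 0" unfolding x_def by simp
    hence "(int a1 * int j) mod int p = 0" using r0 by linarith
    thus False using not_dvd_prod[OF p a(1,2) j] by (simp add: dvd_eq_mod_eq_0)
  qed
  have H: "int (cnt p (LL a1 a2 j) x) - int (cnt p (LL a1 a2 0) x)
       = int (cnt p (LL a1 a2 j) 0) - int (cnt p (LL a1 a2 0) 0)"
    by (rule eig_eq_cnt[OF p ceq x])
  have L0: "LL a1 a2 0 = [0, 0, 0, 0]" unfolding LL_def by simp
  have c1: "cnt p (LL a1 a2 0) x = 0" using x0 unfolding cnt_def L0 by simp
  have c2: "cnt p (LL a1 a2 0) 0 = 4" unfolding cnt_def L0 by simp
  have c3: "cnt p (LL a1 a2 j) 0 = 0" by (rule cnt_LL_0[OF p a j])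
  from H show False unfolding c1 c2 c3 by simp
qed

lemma nt_main:
  fixes q u v J K :: int
  assumes q: "prime q" and nu: "\<not> q dvd u" and nv: "\<not> q dvd v" and nuv: "\<not> q dvd u - v"
    and nuv': "\<not> q dvd u + v" and nK: "\<not> q dvd K"
    and h1: "q dvd u*J - u*K \<or> q dvd u*J + u*K \<or> q dvd u*J - v*K \<or> q dvd u*J + v*K"
    and h2: "q dvd v*J - u*K \<or> q dvd v*J + u*K \<or> q dvd v*J - v*K \<or> q dvd v*J + v*K"
  shows "q dvd J - K \<or> q dvd J + K \<or> (q dvd u^2 + v^2 \<and> q dvd J^2 + K^2)"
proof -
  have pd: "q dvd b" if "q dvd a * b" "\<not> q dvd a" for a b using that q by (simp add: prime_dvd_mult_iff)
  have nu2: "\<not> q dvd u^2" using nu q by (simp add: prime_dvd_power_iff)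
  have sq: "q dvd J^2 + K^2" if "q dvd u^2 + v^2" "q dvd (u*J - v*K) * (u*J + v*K)"
  proof -
    have "q dvd (u*J - v*K) * (u*J + v*K) + K^2 * (u^2 + v^2)" using that by simp
    moreover have "(u*J - v*K) * (u*J + v*K) + K^2 * (u^2 + v^2) = u^2 * (J^2 + K^2)"
      by (simp add: algebra_simps power2_eq_square)
    ultimately have "q dvd u^2 * (J^2 + K^2)" by simp
    thus ?thesis using pd[OF _ nu2] by blast
  qed
  have contra: False if "q dvd (u - v) * ((u + v) * K)"
  proof -
    have "q dvd (u + v) * K" using pd[OF that nuv] .
    hence "q dvd K" using pd[OF _ nuv'] by blast
    thus False using nK by simp
  qed
  consider (a) "q dvd u*J - u*K" | (b) "q dvd u*J + u*K" | (c) "q dvd v*J - v*K" | (d) "q dvd v*J + v*K"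
    | (e) "q dvd u*J - v*K" "q dvd v*J - u*K" | (f) "q dvd u*J - v*K" "q dvd v*J + u*K"
    | (g) "q dvd u*J + v*K" "q dvd v*J - u*K" | (h) "q dvd u*J + v*K" "q dvd v*J + u*K"
    using h1 h2 by argo
  thus ?thesis
  proof cases
    case a
    have "u*J - u*K = u * (J - K)" by (simp add: algebra_simps)
    hence "q dvd u * (J - K)" using a by simp
    thus ?thesis using pd[OF _ nu] by blast
  next
    case b
    have "u*J + u*K = u * (J + K)" by (simp add: algebra_simps)
    hence "q dvd u * (J + K)" using b by simp
    thus ?thesis using pd[OF _ nu] by blast
  next
    case c
    have "v*J - v*K = v * (J - K)" by (simp add: algebra_simps)
    hence "q dvd v * (J - K)" using c by simp
    thus ?thesis using pd[OF _ nv] by blast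
  next
    case d
    have "v*J + v*K = v * (J + K)" by (simp add: algebra_simps)
    hence "q dvd v * (J + K)" using d by simp
    thus ?thesis using pd[OF _ nv] by blast
  next
    case e
    have "q dvd v * (u*J - v*K) - u * (v*J - u*K)" using e by simp
    moreover have "v * (u*J - v*K) - u * (v*J - u*K) = (u - v) * ((u + v) * K)" by (simp add: algebra_simps)
    ultimately show ?thesis using contra by simp
  next
    case f
    have "q dvd u * (v*J + u*K) - v * (u*J - v*K)" using f by simp
    moreover have "u * (v*J + u*K) - v * (u*J - v*K) = K * (u^2 + v^2)" by (simp add: algebra_simps power2_eq_square)
    ultimately have "q dvd K * (u^2 + v^2)" by simp
    hence uv: "q dvd u^2 + v^2" using pd[OF _ nK] by blast
    have "q dvd (u*J - v*K) * (u*J + v*K)" using f by simp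
    thus ?thesis using sq uv by blast
  next
    case g
    have "q dvd v * (u*J + v*K) - u * (v*J - u*K)" using g by simp
    moreover have "v * (u*J + v*K) - u * (v*J - u*K) = K * (u^2 + v^2)" by (simp add: algebra_simps power2_eq_square)
    ultimately have "q dvd K * (u^2 + v^2)" by simp
    hence uv: "q dvd u^2 + v^2" using pd[OF _ nK] by blast
    have "q dvd (u*J - v*K) * (u*J + v*K)" using g by simp
    thus ?thesis using sq uv by blast
  next
    case h
    have "q dvd u * (v*J + u*K) - v * (u*J + v*K)" using h by simp
    moreover have "u * (v*J + u*K) - v * (u*J + v*K) = (u - v) * ((u + v) * K)" by (simp add: algebra_simps)
    ultimately show ?thesis using contra by simp
  qed
qed

lemma nt_back:
  fixes q u v J K :: int
  assumes q: "prime q" and uv: "q dvd u^2 + v^2" and JK: "q dvd J^2 + K^2"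
  shows "(q dvd v*K - u*J \<or> q dvd v*K + u*J) \<and> (q dvd u*K - v*J \<or> q dvd u*K + v*J)"
proof
  have "(v*K - u*J) * (v*K + u*J) = K^2 * (u^2 + v^2) - u^2 * (J^2 + K^2)"
    by (simp add: algebra_simps power2_eq_square)
  moreover have "q dvd K^2 * (u^2 + v^2) - u^2 * (J^2 + K^2)" using uv JK by simp
  ultimately have "q dvd (v*K - u*J) * (v*K + u*J)" by simp
  thus "q dvd v*K - u*J \<or> q dvd v*K + u*J" using q by (simp add: prime_dvd_mult_iff)
next
  have "(u*K - v*J) * (u*K + v*J) = u^2 * (J^2 + K^2) - J^2 * (u^2 + v^2)"
    by (simp add: algebra_simps power2_eq_square)
  moreover have "q dvd u^2 * (J^2 + K^2) - J^2 * (u^2 + v^2)" using uv JK by simp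
  ultimately have "q dvd (u*K - v*J) * (u*K + v*J)" by simp
  thus "q dvd u*K - v*J \<or> q dvd u*K + v*J" using q by (simp add: prime_dvd_mult_iff)
qed

lemma eig_fwd:
  assumes p: "prime p" and a: "1 \<le> a1" "a1 < a2" "2 * a2 \<le> p"
    and j: "j \<in> {1..p-1}" and k: "k \<in> {1..p-1}"
    and eq: "circ_eig p a1 a2 j = circ_eig p a1 a2 k"
  shows "j = k \<or> p dvd (j + k) \<or> (p dvd (a1^2 + a2^2) \<and> p dvd (j^2 + k^2))"
proof -
  have p0: "p > 0" using p prime_gt_0_nat by blast
  have ip: "prime (int p)" using p by simp
  have j': "0 < j" "j < p" and k': "0 < k" "k < p" using j k p0 by auto
  have a': "0 < a1" "a1 < p" "0 < a2" "a2 < p" using a by auto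
  define u where "u = int a1"
  define v where "v = int a2"
  define J where "J = int j"
  define K where "K = int k"
  have m1: "\<exists>e \<in> set (LL a1 a2 k). int p dvd u*J - e"
    unfolding u_def J_def by (rule member_LL[OF p a' j' k' eq]) (simp add: LL_def)
  have m2: "\<exists>e \<in> set (LL a1 a2 k). int p dvd v*J - e"
    unfolding v_def J_def by (rule member_LL[OF p a' j' k' eq]) (simp add: LL_def)
  have h1: "int p dvd u*J - u*K \<or> int p dvd u*J + u*K \<or> int p dvd u*J - v*K \<or> int p dvd u*J + v*K"
    using m1 unfolding LL_def u_def v_def K_def by auto
  have h2: "int p dvd v*J - u*K \<or> int p dvd v*J + u*K \<or> int p dvd v*J - v*K \<or> int p dvd v*J + v*K"
    using m2 unfolding LL_def u_def v_def K_def by auto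
  have nu: "\<not> int p dvd u" unfolding u_def by (rule not_dvd_small) (use a' in auto)
  have nv: "\<not> int p dvd v" unfolding v_def by (rule not_dvd_small) (use a' in auto)
  have nK: "\<not> int p dvd K" unfolding K_def by (rule not_dvd_small) (use k' in auto)
  have nuv: "\<not> int p dvd u - v"
  proof
    assume "int p dvd u - v"
    hence "int p dvd v - u" by (simp add: dvd_diff_commute)
    moreover have "\<not> int p dvd v - u" unfolding u_def v_def by (rule not_dvd_small) (use a' a in auto)
    ultimately show False by simp
  qed
  have nuv': "\<not> int p dvd u + v" unfolding u_def v_def by (rule not_dvd_small) (use a' a in auto)
  have main: "int p dvd J - K \<or> int p dvd J + K \<or> (int p dvd u^2 + v^2 \<and> int p dvd J^2 + K^2)"
    by (rule nt_main[OF ip nu nv nuv nuv' nK h1 h2])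
  have c1: "int p dvd J - K \<Longrightarrow> j = k"
  proof (rule ccontr)
    assume d: "int p dvd J - K" and ne: "j \<noteq> k"
    hence "J - K \<noteq> 0" unfolding J_def K_def by simp
    hence "\<bar>int p\<bar> \<le> \<bar>J - K\<bar>" using d by (intro dvd_imp_le_int)
    thus False unfolding J_def K_def using j' k' by simp
  qed
  have c2: "int p dvd J + K \<Longrightarrow> p dvd (j + k)"
  proof -
    assume "int p dvd J + K"
    hence "int p dvd int (j + k)" unfolding J_def K_def by simp
    thus "p dvd (j + k)" by (simp only: int_dvd_int_iff)
  qed
  have c3: "int p dvd u^2 + v^2 \<Longrightarrow> p dvd (a1^2 + a2^2)"
  proof -
    assume "int p dvd u^2 + v^2"
    hence "int p dvd int (a1^2 + a2^2)" unfolding u_def v_def by simp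
    thus "p dvd (a1^2 + a2^2)" by (simp only: int_dvd_int_iff)
  qed
  have c4: "int p dvd J^2 + K^2 \<Longrightarrow> p dvd (j^2 + k^2)"
  proof -
    assume "int p dvd J^2 + K^2"
    hence "int p dvd int (j^2 + k^2)" unfolding J_def K_def by simp
    thus "p dvd (j^2 + k^2)" by (simp only: int_dvd_int_iff)
  qed
  show ?thesis using main c1 c2 c3 c4 by blast
qed

lemma eig_bwd1:
  assumes p: "prime p" and h: "j = k \<or> p dvd (j + k)"
  shows "circ_eig p a1 a2 j = circ_eig p a1 a2 k"
proof (cases "j = k")
  case True thus ?thesis by simp
next
  case False
  have p0: "p > 0" using p prime_gt_0_nat by blast
  have d: "int p dvd int j + int k" using False h by (metis int_dvd_int_iff of_nat_add)
  have "F p (int a1 * int j) = F p (int a1 * int k)"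
  proof (rule F_cong[OF p0], rule disjI2)
    show "int p dvd int a1 * int j + int a1 * int k" using d
      by (metis distrib_left dvd_mult)
  qed
  moreover have "F p (int a2 * int j) = F p (int a2 * int k)"
  proof (rule F_cong[OF p0], rule disjI2)
    show "int p dvd int a2 * int j + int a2 * int k" using d
      by (metis distrib_left dvd_mult)
  qed
  ultimately show ?thesis by (simp add: eig_F[OF p0])
qed

lemma eig_bwd2:
  assumes p: "prime p" and uv: "p dvd (a1^2 + a2^2)" and jk: "p dvd (j^2 + k^2)"
  shows "circ_eig p a1 a2 j = circ_eig p a1 a2 k"
proof -
  have p0: "p > 0" using p prime_gt_0_nat by blast
  have ip: "prime (int p)" using p by simp
  have uv': "int p dvd (int a1)^2 + (int a2)^2"
  proof -
    have "int p dvd int (a1^2 + a2^2)" using uv by (simp only: int_dvd_int_iff)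
    thus ?thesis by simp
  qed
  have jk': "int p dvd (int j)^2 + (int k)^2"
  proof -
    have "int p dvd int (j^2 + k^2)" using jk by (simp only: int_dvd_int_iff)
    thus ?thesis by simp
  qed
  note nb = nt_back[OF ip uv' jk']
  have "F p (int a2 * int k) = F p (int a1 * int j)"
    by (rule F_cong[OF p0]) (use nb in \<open>simp add: mult.commute\<close>)
  moreover have "F p (int a1 * int k) = F p (int a2 * int j)"
    by (rule F_cong[OF p0]) (use nb in \<open>simp add: mult.commute\<close>)
  ultimately show ?thesis by (simp add: eig_F[OF p0])
qed

definition Fm :: "nat \<Rightarrow> complex mat" where "Fm n = mat n n (\<lambda>(i,j). omega n ^ (i*j))"
definition Gm :: "nat \<Rightarrow> complex mat" where "Gm n = mat n n (\<lambda>(i,j). inverse (omega n ^ (i*j)) / of_nat n)"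
definition Dm :: "nat \<Rightarrow> nat \<Rightarrow> nat \<Rightarrow> complex mat" where
  "Dm n a1 a2 = mat n n (\<lambda>(i,j). if i = j then circ_eig n a1 a2 i else 0)"

lemma mult_entry:
  assumes "A \<in> carrier_mat n n" "B \<in> carrier_mat n n" "i < n" "j < n"
  shows "(A * B) $$ (i,j) = (\<Sum>l = 0..<n. A $$ (i,l) * B $$ (l,j))"
  using assms by (auto simp: scalar_prod_def intro!: sum.cong)

lemma geo_E: assumes n: "n > 0" and i: "i < n" and k: "k < n"
  shows "(\<Sum>l = 0..<n. omega n ^ (i*l) * (inverse (omega n ^ (l*k)) / of_nat n)) = (if i = k then 1 else 0)"
proof -
  define z where "z = E n (int i - int k)"
  have t: "omega n ^ (i*l) * (inverse (omega n ^ (l*k)) / of_nat n) = z ^ l / of_nat n" for l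
  proof -
    have a: "omega n ^ (i*l) = E n (int i * int l)" using E_of_nat[OF n, of "i*l"] by simp
    have b: "inverse (omega n ^ (l*k)) = E n (- (int l * int k))" using E_of_nat[OF n, of "l*k"] E_neg[OF n] by simp
    have "E n (int i * int l) * E n (- (int l * int k)) = E n (int i * int l + - (int l * int k))"
      by (simp only: E_add[OF n])
    also have "\<dots> = E n ((int i - int k) * int l)"
      by (rule arg_cong[where f="E n"]) (simp add: algebra_simps)
    also have "\<dots> = z ^ l" unfolding z_def by (simp only: E_pow[OF n])
    finally show ?thesis unfolding a b by simp
  qed
  have "(\<Sum>l = 0..<n. omega n ^ (i*l) * (inverse (omega n ^ (l*k)) / of_nat n)) = (\<Sum>l<n. z^l) / of_nat n"
  proof -
    have "(\<Sum>l = 0..<n. omega n ^ (i*l) * (inverse (omega n ^ (l*k)) / of_nat n)) = (\<Sum>l = 0..<n. z^l / of_nat n)"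
      by (rule sum.cong) (rule refl, rule t)
    thus ?thesis by (simp add: sum_divide_distrib atLeast0LessThan)
  qed
  also have "\<dots> = (if i = k then 1 else 0)"
  proof (cases "i = k")
    case True
    hence "z = 1" unfolding z_def by (simp add: E_zero)
    thus ?thesis using True n by simp
  next
    case False
    have nd: "\<not> int n dvd int i - int k"
    proof
      assume d: "int n dvd int i - int k"
      have "int i - int k \<noteq> 0" using False by simp
      hence "\<bar>int n\<bar> \<le> \<bar>int i - int k\<bar>" using d by (intro dvd_imp_le_int)
      thus False using i k by simp
    qed
    hence z1: "z \<noteq> 1" unfolding z_def by (simp add: E_eq_1[OF n])
    have "z ^ n = E n ((int i - int k) * int n)" unfolding z_def by (simp only: E_pow[OF n])
    also have "\<dots> = 1" by (simp add: E_eq_1[OF n])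
    finally have zn: "z ^ n = 1" .
    have "(\<Sum>l<n. z^l) = (z^n - 1) / (z - 1)" using z1 by (rule geometric_sum)
    thus ?thesis using zn False by simp
  qed
  finally show ?thesis .
qed

lemma FG: assumes n: "n > 0" shows "Fm n * Gm n = 1\<^sub>m n"
proof (rule eq_matI)
  fix i k assume "i < dim_row (1\<^sub>m n :: complex mat)" "k < dim_col (1\<^sub>m n :: complex mat)"
  hence i: "i < n" and k: "k < n" by auto
  have "(Fm n * Gm n) $$ (i,k) = (\<Sum>l = 0..<n. Fm n $$ (i,l) * Gm n $$ (l,k))"
    by (rule mult_entry) (auto simp: Fm_def Gm_def i k)
  also have "\<dots> = (\<Sum>l = 0..<n. omega n ^ (i*l) * (inverse (omega n ^ (l*k)) / of_nat n))"
    by (rule sum.cong) (auto simp: Fm_def Gm_def i k)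
  also have "\<dots> = (if i = k then 1 else 0)" by (rule geo_E[OF n i k])
  finally show "(Fm n * Gm n) $$ (i,k) = 1\<^sub>m n $$ (i,k)" using i k by simp
qed (auto simp: Fm_def Gm_def)

lemma ind_sum: assumes n: "n > 0" and i: "i < n"
  shows "(\<Sum>l = 0..<n. (if [int i - int l = e] (mod int n) then 1 else 0) * omega n ^ (l*j)) = E n ((int i - e) * int j)"
proof -
  define l0 where "l0 = nat ((int i - e) mod int n)"
  have r0: "0 \<le> (int i - e) mod int n" using n by simp
  have l0n: "l0 < n" unfolding l0_def using n by (simp add: nat_less_iff)
  have il0: "int l0 = (int i - e) mod int n" unfolding l0_def using r0 by simp
  have iff: "[int i - int l = e] (mod int n) \<longleftrightarrow> l = l0" if l: "l < n" for l
  proof -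
    have "[int i - int l = e] (mod int n) \<longleftrightarrow> int n dvd (int i - int l) - e"
      by (simp only: cong_def mod_eq_dvd_iff)
    also have "(int i - int l) - e = (int i - e) - int l" by simp
    also have "int n dvd (int i - e) - int l \<longleftrightarrow> (int i - e) mod int n = int l mod int n"
      by (simp only: mod_eq_dvd_iff)
    also have "int l mod int n = int l" using l by simp
    also have "(int i - e) mod int n = int l \<longleftrightarrow> l = l0" using il0 by auto
    finally show ?thesis .
  qed
  have "(\<Sum>l = 0..<n. (if [int i - int l = e] (mod int n) then 1 else 0) * omega n ^ (l*j))
      = (\<Sum>l = 0..<n. (if l = l0 then omega n ^ (l*j) else 0))"
    by (rule sum.cong) (auto simp: iff)
  also have "\<dots> = omega n ^ (l0*j)" using l0n by simp
  also have "\<dots> = E n (int l0 * int j)" using E_of_nat[OF n, of "l0*j"] by simp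
  also have "\<dots> = E n ((int i - e) * int j)"
    by (rule E_cong) (simp add: il0 mod_mult_left_eq)
  finally show ?thesis .
qed

lemma excl: "\<not> int n dvd a - b \<Longrightarrow> \<not> ([x = a] (mod int n) \<and> [x = b] (mod int n))"
  by (metis cong_def mod_eq_dvd_iff)

lemma E_shift: assumes n: "n > 0" shows "E n ((x - e) * y) = E n (x * y) * E n (- (e * y))"
proof -
  have "E n ((x - e) * y) = E n (x * y + - (e * y))"
    by (rule arg_cong[where f="E n"]) (simp add: algebra_simps)
  thus ?thesis by (simp only: E_add[OF n])
qed

lemma two_a2_lt: fixes n a1 a2 :: nat assumes p: "prime n" and a: "1 \<le> a1" "a1 < a2" "2 * a2 \<le> n" shows "2 * a2 < n"
proof -
  have "2 * a2 \<noteq> n"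
  proof
    assume h: "2 * a2 = n"
    hence "2 dvd n" by auto
    hence "2 = n" using p by (auto simp: prime_nat_iff)
    thus False using h a by simp
  qed
  thus ?thesis using a by simp
qed

lemma AF: assumes p: "prime n" and a: "1 \<le> a1" "a1 < a2" "2 * a2 \<le> n"
  shows "circ_adj n a1 a2 * Fm n = Fm n * Dm n a1 a2"
proof (rule eq_matI)
  have n: "n > 0" using p prime_gt_0_nat by blast
  have n2: "2 * a2 < n" by (rule two_a2_lt[OF p a])
  fix i j assume "i < dim_row (Fm n * Dm n a1 a2)" "j < dim_col (Fm n * Dm n a1 a2)"
  hence i: "i < n" and j: "j < n" by (auto simp: Fm_def Dm_def)
  define u where "u = int a1"
  define v where "v = int a2"
  have cA: "circ_adj n a1 a2 \<in> carrier_mat n n" unfolding circ_adj_def by simp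
  have cF: "Fm n \<in> carrier_mat n n" unfolding Fm_def by simp
  have cD: "Dm n a1 a2 \<in> carrier_mat n n" unfolding Dm_def by simp
  have pos: "0 < u" "u < v" "2 * v < int n" using a n2 unfolding u_def v_def by auto
  have d1: "\<not> int n dvd 2 * u" by (rule not_dvd_small; insert pos; linarith)
  have d2: "\<not> int n dvd v - u" by (rule not_dvd_small; insert pos; linarith)
  have d3: "\<not> int n dvd u + v" by (rule not_dvd_small; insert pos; linarith)
  have d4: "\<not> int n dvd 2 * v" by (rule not_dvd_small; insert pos; linarith)
  have eq12: "u - (- u) = 2 * u" by simp
  have e12: "\<not> int n dvd u - (- u)" unfolding eq12 by (rule d1)
  have e13: "\<not> int n dvd u - v" using d2 by (metis dvd_diff_commute)
  have e14: "\<not> int n dvd u - (- v)" using d3 by simp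
  have eq23: "(- u) - v = - (u + v)" by simp
  have e23: "\<not> int n dvd (- u) - v" unfolding eq23 dvd_minus_iff by (rule d3)
  have e24: "\<not> int n dvd (- u) - (- v)" using d2 by (simp add: add.commute)
  have eq34: "v - (- v) = 2 * v" by simp
  have e34: "\<not> int n dvd v - (- v)" unfolding eq34 by (rule d4)
  have ind: "circ_adj n a1 a2 $$ (i,l) =
      (if [int i - int l = u] (mod int n) then 1 else 0) + (if [int i - int l = - u] (mod int n) then 1 else 0)
    + (if [int i - int l = v] (mod int n) then 1 else 0) + (if [int i - int l = - v] (mod int n) then 1 else 0)"
    if l: "l < n" for l
  proof -
    define P1 where "P1 = [int i - int l = u] (mod int n)"
    define P2 where "P2 = [int i - int l = - u] (mod int n)"
    define P3 where "P3 = [int i - int l = v] (mod int n)"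
    define P4 where "P4 = [int i - int l = - v] (mod int n)"
    have x12: "\<not> (P1 \<and> P2)" unfolding P1_def P2_def by (rule excl[OF e12])
    have x13: "\<not> (P1 \<and> P3)" unfolding P1_def P3_def by (rule excl[OF e13])
    have x14: "\<not> (P1 \<and> P4)" unfolding P1_def P4_def by (rule excl[OF e14])
    have x23: "\<not> (P2 \<and> P3)" unfolding P2_def P3_def by (rule excl[OF e23])
    have x24: "\<not> (P2 \<and> P4)" unfolding P2_def P4_def by (rule excl[OF e24])
    have x34: "\<not> (P3 \<and> P4)" unfolding P3_def P4_def by (rule excl[OF e34])
    have "circ_adj n a1 a2 $$ (i,l) = (if P1 \<or> P2 \<or> P3 \<or> P4 then 1 else 0)"
      unfolding circ_adj_def P1_def P2_def P3_def P4_def u_def v_def using i l by (simp only: index_mat case_prod_conv)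
    also have "\<dots> = (if P1 then 1 else 0) + (if P2 then 1 else 0) + (if P3 then 1 else 0) + (if P4 then 1 else 0)"
      using x12 x13 x14 x23 x24 x34 by auto
    finally show ?thesis unfolding P1_def P2_def P3_def P4_def .
  qed
  have "(circ_adj n a1 a2 * Fm n) $$ (i,j) = (\<Sum>l = 0..<n. circ_adj n a1 a2 $$ (i,l) * Fm n $$ (l,j))"
    by (rule mult_entry[OF cA cF i j])
  also have "\<dots> = (\<Sum>l = 0..<n.
      (if [int i - int l = u] (mod int n) then 1 else 0) * omega n ^ (l*j)
    + (if [int i - int l = - u] (mod int n) then 1 else 0) * omega n ^ (l*j)
    + (if [int i - int l = v] (mod int n) then 1 else 0) * omega n ^ (l*j)
    + (if [int i - int l = - v] (mod int n) then 1 else 0) * omega n ^ (l*j))"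
    by (rule sum.cong) (auto simp: ind Fm_def j distrib_right)
  also have "\<dots> = E n ((int i - u) * int j) + E n ((int i - - u) * int j)
      + E n ((int i - v) * int j) + E n ((int i - - v) * int j)"
    by (simp only: sum.distrib ind_sum[OF n i])
  also have "\<dots> = E n (int i * int j) * circ_eig n a1 a2 j"
    unfolding eig_LL[OF n] LL_def E_shift[OF n] u_def v_def by (simp add: algebra_simps)
  also have "\<dots> = (Fm n * Dm n a1 a2) $$ (i,j)"
  proof -
    have "(Fm n * Dm n a1 a2) $$ (i,j) = (\<Sum>l = 0..<n. Fm n $$ (i,l) * Dm n a1 a2 $$ (l,j))"
      by (rule mult_entry[OF cF cD i j])
    also have "\<dots> = (\<Sum>l = 0..<n. if l = j then omega n ^ (i*j) * circ_eig n a1 a2 j else 0)"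
      by (rule sum.cong) (auto simp: Fm_def Dm_def i j)
    also have "\<dots> = omega n ^ (i*j) * circ_eig n a1 a2 j" using j by simp
    also have "omega n ^ (i*j) = E n (int i * int j)" using E_of_nat[OF n, of "i*j"] by simp
    finally show ?thesis by simp
  qed
  finally show "(circ_adj n a1 a2 * Fm n) $$ (i,j) = (Fm n * Dm n a1 a2) $$ (i,j)" .
next
  show "dim_row (circ_adj n a1 a2 * Fm n) = dim_row (Fm n * Dm n a1 a2)"
    by (simp add: circ_adj_def Fm_def)
  show "dim_col (circ_adj n a1 a2 * Fm n) = dim_col (Fm n * Dm n a1 a2)"
    by (simp add: Dm_def Fm_def)
qed

lemma order_prod_lin: "finite I \<Longrightarrow> order c (\<Prod>i\<in>I. [:- f i, 1:]) = card {i\<in>I. f i = c}"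
proof (induction I rule: finite_induct)
  case empty
  show ?case by (simp add: order_0I)
next
  case (insert x I)
  have nz: "(\<Prod>i\<in>I. [:- f i, 1:]) \<noteq> 0" using insert.hyps(1) by (simp add: prod_zero_iff)
  have nz1: "[:- f x, 1:] \<noteq> 0" by simp
  have nz2: "[:- f x, 1:] * (\<Prod>i\<in>I. [:- f i, 1:]) \<noteq> 0" by (rule no_zero_divisors[OF nz1 nz])
  have "order c (\<Prod>i\<in>insert x I. [:- f i, 1:]) = order c ([:- f x, 1:] * (\<Prod>i\<in>I. [:- f i, 1:]))"
    using insert.hyps by simp
  also have "\<dots> = order c [:- f x, 1:] + order c (\<Prod>i\<in>I. [:- f i, 1:])" by (rule order_mult[OF nz2])
  also have "\<dots> = (if f x = c then 1 else 0) + card {i\<in>I. f i = c}"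
  proof -
    have o1: "order c [:- f x, 1:] = (if f x = c then 1 else 0)" using order_linear'[of c "- f x"] by simp
    show ?thesis by (simp only: o1 insert.IH)
  qed
  also have "\<dots> = card {i\<in>insert x I. f i = c}"
  proof (cases "f x = c")
    case True
    hence "{i\<in>insert x I. f i = c} = insert x {i\<in>I. f i = c}" by auto
    thus ?thesis using True insert.hyps by simp
  next
    case False
    hence "{i\<in>insert x I. f i = c} = {i\<in>I. f i = c}" by auto
    thus ?thesis using False by simp
  qed
  finally show ?case .
qed

lemma char_poly_circ: assumes p: "prime n" and a: "1 \<le> a1" "a1 < a2" "2 * a2 \<le> n"
  shows "char_poly (circ_adj n a1 a2) = (\<Prod>i = 0..<n. [:- circ_eig n a1 a2 i, 1:])"
proof -
  have n: "n > 0" using p prime_gt_0_nat by blast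
  have cA: "circ_adj n a1 a2 \<in> carrier_mat n n" unfolding circ_adj_def by simp
  have cF: "Fm n \<in> carrier_mat n n" unfolding Fm_def by simp
  have cG: "Gm n \<in> carrier_mat n n" unfolding Gm_def by simp
  have cD: "Dm n a1 a2 \<in> carrier_mat n n" unfolding Dm_def by simp
  have fg: "Fm n * Gm n = 1\<^sub>m n" by (rule FG[OF n])
  have gf: "Gm n * Fm n = 1\<^sub>m n" by (rule mat_mult_left_right_inverse[OF cF cG fg])
  have "circ_adj n a1 a2 = circ_adj n a1 a2 * (Fm n * Gm n)" using cA by (simp add: fg right_mult_one_mat)
  also have "\<dots> = (circ_adj n a1 a2 * Fm n) * Gm n" by (rule assoc_mult_mat[OF cA cF cG, symmetric])
  also have "\<dots> = (Fm n * Dm n a1 a2) * Gm n" by (simp only: AF[OF p a])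
  finally have eq: "circ_adj n a1 a2 = Fm n * Dm n a1 a2 * Gm n" .
  have sim: "similar_mat (circ_adj n a1 a2) (Dm n a1 a2)"
    by (rule similar_matI[OF _ fg gf eq]) (use cA cF cG cD in auto)
  have "char_poly (circ_adj n a1 a2) = char_poly (Dm n a1 a2)" by (rule char_poly_similar[OF sim])
  also have "\<dots> = (\<Prod>a\<leftarrow>diag_mat (Dm n a1 a2). [:- a, 1:])"
    by (rule char_poly_upper_triangular[OF cD]) (simp add: upper_triangular_def Dm_def)
  also have "diag_mat (Dm n a1 a2) = map (\<lambda>i. circ_eig n a1 a2 i) [0..<n]"
    unfolding diag_mat_def Dm_def by simp
  also have "(\<Prod>a\<leftarrow>map (\<lambda>i. circ_eig n a1 a2 i) [0..<n]. [:- a, 1:])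
      = (\<Prod>i = 0..<n. [:- circ_eig n a1 a2 i, 1:])"
    using prod.distinct_set_conv_list[of "[0..<n]" "\<lambda>i. [:- circ_eig n a1 a2 i, 1:]"] by (simp add: o_def)
  finally show ?thesis .
qed

lemma dvd_sum_eq: fixes n i j :: nat assumes "n dvd i + j" "0 < i" "i < n" "0 < j" "j < n" shows "i + j = n"
proof -
  obtain m where m: "i + j = n * m" using assms(1) by (rule dvdE)
  have "m \<noteq> 0"
  proof
    assume "m = 0"
    hence "i + j = 0" using m by simp
    thus False using assms by simp
  qed
  moreover have "m < 2"
  proof (rule ccontr)
    assume "\<not> m < 2"
    hence "n * 2 \<le> n * m" by simp
    thus False using m assms by linarith
  qed
  ultimately have "m = 1" by simp
  thus ?thesis using m by simp
qed

theorem proposition3: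
  fixes n a1 a2 :: nat
  assumes "prime n" and "1 \<le> a1" and "a1 < a2" and "2 * a2 \<le> n"
  shows "(\<not> n dvd (a1^2 + a2^2) \<longrightarrow>
            circ_eig n a1 a2 0 = 4
          \<and> order 4 (char_poly (circ_adj n a1 a2)) = 1
          \<and> (\<forall>j\<in>{1..n-1}. order (circ_eig n a1 a2 j) (char_poly (circ_adj n a1 a2)) = 2)
          \<and> (\<forall>j\<in>{1..n-1}. \<forall>k\<in>{1..n-1}.
               circ_eig n a1 a2 j = circ_eig n a1 a2 k \<longleftrightarrow> j = k \<or> n dvd (j + k)))
       \<and> (n dvd (a1^2 + a2^2) \<longrightarrow>
            (\<forall>j\<in>{1..n-1}. \<forall>k\<in>{1..n-1}.
               circ_eig n a1 a2 j = circ_eig n a1 a2 k \<longleftrightarrow>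
                 j = k \<or> n dvd (j + k) \<or> n dvd (j^2 + k^2)))"
proof -
  note p = assms(1)
  note a = assms(2,3,4)
  have n0: "n > 0" using p prime_gt_0_nat by blast
  have n2: "2 * a2 < n" by (rule two_a2_lt[OF p a])
  have a': "0 < a1" "a1 < n" "0 < a2" "a2 < n" using a n2 by auto
  have ord: "order c (char_poly (circ_adj n a1 a2)) = card {i\<in>{0..<n}. circ_eig n a1 a2 i = c}" for c
    unfolding char_poly_circ[OF p a] by (rule order_prod_lin) simp
  have ne4: "circ_eig n a1 a2 j \<noteq> 4" if "j \<in> {1..n-1}" for j
    by (rule eig_ne_4[OF p a']) (use that n0 in auto)
  show ?thesis
  proof (intro conjI impI)
    assume nd: "\<not> n dvd (a1^2 + a2^2)"
    show "circ_eig n a1 a2 0 = 4" by (rule eig_0)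
    have "{i\<in>{0..<n}. circ_eig n a1 a2 i = 4} = {0}"
    proof safe
      fix i assume "i \<in> {0..<n}" "circ_eig n a1 a2 i = 4"
      thus "i = 0" using ne4[of i] by (cases "i = 0") auto
    qed (use n0 eig_0 in auto)
    thus "order 4 (char_poly (circ_adj n a1 a2)) = 1" by (simp add: ord)
    have eqv: "circ_eig n a1 a2 j = circ_eig n a1 a2 k \<longleftrightarrow> j = k \<or> n dvd (j + k)"
      if j: "j \<in> {1..n-1}" and k: "k \<in> {1..n-1}" for j k
    proof
      assume "circ_eig n a1 a2 j = circ_eig n a1 a2 k"
      from eig_fwd[OF p a j k this] nd show "j = k \<or> n dvd (j + k)" by blast
    next
      assume "j = k \<or> n dvd (j + k)"
      thus "circ_eig n a1 a2 j = circ_eig n a1 a2 k" by (rule eig_bwd1[OF p])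
    qed
    show "\<forall>j\<in>{1..n-1}. \<forall>k\<in>{1..n-1}.
               circ_eig n a1 a2 j = circ_eig n a1 a2 k \<longleftrightarrow> j = k \<or> n dvd (j + k)"
      using eqv by blast
    show "\<forall>j\<in>{1..n-1}. order (circ_eig n a1 a2 j) (char_poly (circ_adj n a1 a2)) = 2"
    proof
      fix j assume j: "j \<in> {1..n-1}"
      have j': "0 < j" "j < n" using j n0 by auto
      have nj: "n - j \<in> {1..n-1}" using j' by auto
      have jne: "j \<noteq> n - j"
      proof
        assume "j = n - j"
        hence "n = 2 * j" using j' by simp
        hence "2 dvd n" by simp
        hence "n = 2" using p by (auto simp: prime_nat_iff)
        thus False using n2 a by simp
      qed
      have lnj: "circ_eig n a1 a2 (n - j) = circ_eig n a1 a2 j"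
      proof -
        have "n dvd (n - j + j)" using j' by simp
        thus ?thesis using eqv[OF nj j] by blast
      qed
      have "{i\<in>{0..<n}. circ_eig n a1 a2 i = circ_eig n a1 a2 j} = {j, n - j}"
      proof (rule equalityI)
        show "{i\<in>{0..<n}. circ_eig n a1 a2 i = circ_eig n a1 a2 j} \<subseteq> {j, n - j}"
        proof
        fix i assume "i \<in> {i\<in>{0..<n}. circ_eig n a1 a2 i = circ_eig n a1 a2 j}"
        hence i: "i \<in> {0..<n}" and e: "circ_eig n a1 a2 i = circ_eig n a1 a2 j" by auto
        show "i \<in> {j, n - j}"
        proof (cases "i = 0")
          case True
          hence "circ_eig n a1 a2 j = 4" using e eig_0 by simp
          thus ?thesis using ne4[OF j] by simp
        next
          case False
          hence i1: "i \<in> {1..n-1}" using i by auto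
          have "i = j \<or> n dvd (i + j)" using eqv[OF i1 j] e by simp
          moreover have "n dvd (i + j) \<Longrightarrow> i = n - j" using dvd_sum_eq[of n i j] i1 j' by auto
          ultimately show ?thesis by blast
        qed
        qed
      next
        show "{j, n - j} \<subseteq> {i\<in>{0..<n}. circ_eig n a1 a2 i = circ_eig n a1 a2 j}" using j' lnj by auto
      qed
      thus "order (circ_eig n a1 a2 j) (char_poly (circ_adj n a1 a2)) = 2" using jne by (simp add: ord)
    qed
  next
    assume d: "n dvd (a1^2 + a2^2)"
    show "\<forall>j\<in>{1..n-1}. \<forall>k\<in>{1..n-1}.
               circ_eig n a1 a2 j = circ_eig n a1 a2 k \<longleftrightarrow>
                 j = k \<or> n dvd (j + k) \<or> n dvd (j^2 + k^2)"
    proof (intro ballI iffI)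
      fix j k assume j: "j \<in> {1..n-1}" and k: "k \<in> {1..n-1}"
      {
        assume "circ_eig n a1 a2 j = circ_eig n a1 a2 k"
        from eig_fwd[OF p a j k this] show "j = k \<or> n dvd (j + k) \<or> n dvd (j^2 + k^2)" by blast
      next
        assume h: "j = k \<or> n dvd (j + k) \<or> n dvd (j^2 + k^2)"
        show "circ_eig n a1 a2 j = circ_eig n a1 a2 k"
        proof (cases "j = k \<or> n dvd (j + k)")
          case True thus ?thesis by (rule eig_bwd1[OF p])
        next
          case False
          hence "n dvd (j^2 + k^2)" using h by blast
          thus ?thesis by (rule eig_bwd2[OF p d])
        qed
      }
    qed
  qed
qed

end
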